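(* Let $N\ge3$. For every $\gamma\in(\mathbb{Z}/N\mathbb{Z})^\times$, $\tilde\delta_\gamma(\mathfrak{dmr}_0^{[N]})\subset\mathfrak{dmr}_0^{[N]}$ and $\delta_\gamma(\mathfrak{dmr}_0^{\mu_N})\subset\mathfrak{dmr}_0^{\mu_N}$.
   Context: $\mu_N$ the complex $N$-th roots of unity, $\iota:\{1,\dots,N\}\to\mathbb{Z}/N\mathbb{Z}$ the residue-class bijection. $\mathbb{Q}\langle\langle\mathcal L\rangle\rangle$: noncommutative formal power series over $\mathcal L$; $(\psi\mid w)$ the coefficient of the word $w$. Alphabets $X=\{x_0\}\cup\{x_\zeta:\zeta\in\mu_N\}$, $Y=\{y_{k,\zeta}:k\ge1,\zeta\in\mu_N\}$, $\widetilde X=\{\tilde x\}\cup\{\tilde x_\alpha:\alpha\in\mathbb{Z}/N\mathbb{Z}\}$, $\widetilde Y=\{\tilde y_{k,\alpha}:k\ge1,\alpha\in\mathbb{Z}/N\mathbb{Z}\}$, with $y_{k,\zeta}\equiv x_0^{k-1}x_\zeta$, $\tilde y_{k,\alpha}\equiv\tilde x^{k-1}\tilde x_\alpha$; $\pi_Y$ (resp. $\pi_{\widetilde Y}$) is the projection of $\mathbb{Q}\langle\langle X\rangle\rangle=\mathbb{Q}\langle\langle Y\rangle\rangle\oplus\mathbb{Q}\langle\langle X\rangle\rangle x_0$ (resp. $\mathbb{Q}\langle\langle\widetilde X\rangle\rangle=\mathbb{Q}\langle\langle\widetilde Y\rangle\rangle\oplus\mathbb{Q}\langle\langle\widetilde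 X\rangle\rangle\tilde x$) onto the first summand. Coproducts: $\widehat\Delta_{sh}$, $\widehat\Delta_{\tilde{sh}}$ make all letters of $X$, $\widetilde X$ primitive; $\widehat\Delta_*(y_{k,\zeta})=y_{k,\zeta}\otimes1+1\otimes y_{k,\zeta}+\sum_{k_1+k_2=k,\,k_i\ge1,\,\zeta_1\zeta_2=\zeta}y_{k_1,\zeta_1}\otimes y_{k_2,\zeta_2}$; $\widehat\Delta_{\tilde*}(\tilde y_{k,\alpha})=\tilde y_{k,\alpha}\otimes1+1\otimes\tilde y_{k,\alpha}+\sum_{k_1+k_2=k,\,k_i\ge1}\tilde y_{k_1,\alpha}\otimes\tilde y_{k_2,\alpha}$. Linear maps: $\mathbf p(x_0^{k_1-1}x_{\zeta_1}\cdots x_0^{k_r-1}x_{\zeta_r}x_0^{k_{r+1}-1})=x_0^{k_1-1}x_{\zeta_1}x_0^{k_2-1}x_{\zeta_1\zeta_2}\cdots x_0^{k_r-1}x_{\zeta_1\cdots\zeta_r}x_0^{k_{r+1}-1}$; $\widetilde{\mathbf q}(\tilde x^{k_1-1}\tilde x_{\alpha_1}\cdots\tilde x^{k_r-1}\tilde x_{\alpha_r}\tilde x^{k_{r+1}-1})=\tilde x^{k_1-1}\tilde x_{\alpha_1-\alpha_2}\cdots\tilde x^{k_{r-1}-1}\tilde x_{\alpha_{r-1}-\alpha_r}\tilde x^{k_r-1}\tilde x_{\alpha_r}\tilde x^{k_{r+1}-1}$. $\mathfrak{dmr}_0^{\mu_N}$: the $\psi\in\mathbb{Q}\langle\langle X\rangle\rangle$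 with (i) $(\psi\mid x_0)=(\psi\mid x_1)=0$; (ii) $\psi$ primitive for $\widehat\Delta_{sh}$; (iii) $(\psi\mid x_\zeta-x_{\zeta^{-1}})=0$ for all $\zeta\in\mu_N$; (iv) $\psi_*:=\pi_Y\mathbf p^{-1}(\psi)+\sum_{n\ge2}\frac{(-1)^{n-1}}{n}(\psi\mid x_0^{n-1}x_1)y_{1,1}^n$ primitive for $\widehat\Delta_*$. $\mathfrak{dmr}_0^{[N]}$: the $\widetilde\psi\in\mathbb{Q}\langle\langle\widetilde X\rangle\rangle$ with (i) $(\widetilde\psi\mid\tilde x)=\sum_\alpha(\widetilde\psi\mid\tilde x_\alpha)=0$; (ii) $\widetilde\psi$ primitive for $\widehat\Delta_{\tilde{sh}}$; (iii) $(\widetilde\psi\mid\tilde x_\alpha-\tilde x_{-\alpha})=0$ for all $\alpha$; (iv) $\widetilde\psi_{\tilde*}:=\pi_{\widetilde Y}\widetilde{\mathbf q}^{-1}(\widetilde\psi)+\sum_{n\ge2}\sum_{a,b_1,\dots,b_n=1}^N\frac{(-1)^{n-1}}{nN^{n+1}}(\widetilde\psi\mid\tilde x^{n-1}\tilde x_{\iota(a)})\tilde y_{1,\iota(b_1)}\cdots\tilde y_{1,\iota(b_n)}$ primitive for $\widehat\Delta_{\tilde*}$. For $\gamma\in(\mathbb{Z}/N\mathbb{Z})^\times$: $\delta_\gamma$ is the algebra automorphism of $\mathbb{Q}\langle\langle X\rangle\rangle$ with $x_0\mapsto x_0$, $x_\zeta\mapsto x_{\zeta^{\iota^{-1}(\gamma)}}$;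 $\tilde\delta_\gamma$ is the algebra automorphism of $\mathbb{Q}\langle\langle\widetilde X\rangle\rangle$ with $\tilde x\mapsto\tilde x$, $\tilde x_\alpha\mapsto\tilde x_{\gamma\alpha}$. *)

theory Defs
  imports Complex_Main "HOL-Computational_Algebra.Primes"
begin

(* Letters of the alphabets X = {x_0} \<union> {x_zeta : zeta \<in> mu_N} and
   X~ = {x~} \<union> {x~_alpha : alpha \<in> Z/NZ}.  Roots of unity are complex numbers
   (validity zeta^N = 1 is imposed by a support condition); residues alpha are
   represented by their canonical representative in {0..<N}. *)
datatype xlet = X0 | XZ complex
datatype tlet = TX | TXA int

type_synonym 'a series = "'a list \<Rightarrow> rat"

definition valid_X :: "nat \<Rightarrow> xlet list \<Rightarrow> bool" where
  "valid_X N w = (\<forall>l\<in>set w. case l of X0 \<Rightarrow> True | XZ z \<Rightarrow> z ^ N = 1)"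

definition valid_T :: "nat \<Rightarrow> tlet list \<Rightarrow> bool" where
  "valid_T N w = (\<forall>l\<in>set w. case l of TX \<Rightarrow> True | TXA a \<Rightarrow> 0 \<le> a \<and> a < int N)"

(* Y-letters y_{k,zeta} = (k, zeta), Y~-letters y~_{k,alpha} = (k, alpha) *)
definition valid_Y :: "nat \<Rightarrow> (nat \<times> complex) list \<Rightarrow> bool" where
  "valid_Y N v = (\<forall>(k,z)\<in>set v. 1 \<le> k \<and> z ^ N = 1)"

definition valid_TY :: "nat \<Rightarrow> (nat \<times> int) list \<Rightarrow> bool" where
  "valid_TY N v = (\<forall>(k,a)\<in>set v. 1 \<le> k \<and> 0 \<le> a \<and> a < int N)"

definition ser_X :: "nat \<Rightarrow> xlet series \<Rightarrow> bool" where
  "ser_X N \<psi> = (\<forall>w. \<psi> w \<noteq> 0 \<longrightarrow> valid_X N w)"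

definition ser_T :: "nat \<Rightarrow> tlet series \<Rightarrow> bool" where
  "ser_T N \<psi> = (\<forall>w. \<psi> w \<noteq> 0 \<longrightarrow> valid_T N w)"

definition yX :: "(nat \<times> complex) list \<Rightarrow> xlet list" where
  "yX v = concat (map (\<lambda>(k,z). replicate (k - 1) X0 @ [XZ z]) v)"

definition tyX :: "(nat \<times> int) list \<Rightarrow> tlet list" where
  "tyX v = concat (map (\<lambda>(k,a). replicate (k - 1) TX @ [TXA a]) v)"

(* A coproduct is an algebra morphism given on letters:
   D a u v = coefficient of u \<otimes> v in Delta(a).
   dw D w u v = coefficient of u \<otimes> v in Delta(w) = Delta(a_1)...Delta(a_n). *)
fun dw :: "('a \<Rightarrow> 'a list \<Rightarrow> 'a list \<Rightarrow> rat) \<Rightarrow> 'a list \<Rightarrow> 'a list \<Rightarrow> 'a list \<Rightarrow> rat" where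
  "dw D [] u v = (if u = [] \<and> v = [] then 1 else 0)"
| "dw D (a # w) u v =
     (\<Sum>i\<le>length u. \<Sum>j\<le>length v. D a (take i u) (take j v) * dw D w (drop i u) (drop j v))"

definition coprod :: "('a \<Rightarrow> 'a list \<Rightarrow> 'a list \<Rightarrow> rat) \<Rightarrow> 'a series \<Rightarrow> 'a list \<Rightarrow> 'a list \<Rightarrow> rat" where
  "coprod D \<psi> u v = (\<Sum>w\<in>{w. dw D w u v \<noteq> 0}. \<psi> w * dw D w u v)"

definition primitive :: "('a \<Rightarrow> 'a list \<Rightarrow> 'a list \<Rightarrow> rat) \<Rightarrow> 'a series \<Rightarrow> bool" where
  "primitive D \<psi> = (\<forall>u v. coprod D \<psi> u v =
      (if v = [] then \<psi> u else 0) + (if u = [] then \<psi> v else 0))"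

definition sh_D :: "'a \<Rightarrow> 'a list \<Rightarrow> 'a list \<Rightarrow> rat" where
  "sh_D a u v = (if u = [a] \<and> v = [] then 1 else 0) + (if u = [] \<and> v = [a] then 1 else 0)"

definition st_D :: "nat \<Rightarrow> nat \<times> complex \<Rightarrow> (nat \<times> complex) list \<Rightarrow> (nat \<times> complex) list \<Rightarrow> rat" where
  "st_D N y u v = sh_D y u v +
     (if (\<exists>k1 z1 k2 z2. u = [(k1,z1)] \<and> v = [(k2,z2)] \<and> 1 \<le> k1 \<and> 1 \<le> k2 \<and>
          k1 + k2 = fst y \<and> z1 ^ N = 1 \<and> z2 ^ N = 1 \<and> z1 * z2 = snd y) then 1 else 0)"

definition stt_D :: "nat \<times> int \<Rightarrow> (nat \<times> int) list \<Rightarrow> (nat \<times> int) list \<Rightarrow> rat" where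
  "stt_D y u v = sh_D y u v +
     (if (\<exists>k1 k2. u = [(k1, snd y)] \<and> v = [(k2, snd y)] \<and> 1 \<le> k1 \<and> 1 \<le> k2 \<and>
          k1 + k2 = fst y) then 1 else 0)"

fun pX :: "complex \<Rightarrow> xlet list \<Rightarrow> xlet list" where
  "pX c [] = []"
| "pX c (X0 # w) = X0 # pX c w"
| "pX c (XZ z # w) = XZ (c * z) # pX (c * z) w"

fun nextA :: "tlet list \<Rightarrow> int option" where
  "nextA [] = None"
| "nextA (TX # w) = nextA w"
| "nextA (TXA a # w) = Some a"

fun qT :: "nat \<Rightarrow> tlet list \<Rightarrow> tlet list" where
  "qT N [] = []"
| "qT N (TX # w) = TX # qT N w"
| "qT N (TXA a # w) =
     TXA (case nextA w of None \<Rightarrow> a | Some b \<Rightarrow> (a - b) mod int N) # qT N w"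

definition iota :: "nat \<Rightarrow> nat \<Rightarrow> int" where
  "iota N a = int a mod int N"

definition iota_inv :: "nat \<Rightarrow> int \<Rightarrow> nat" where
  "iota_inv N g = (if g mod int N = 0 then N else nat (g mod int N))"

(* psi_* ; note p^{-1}(psi) = psi o p on words since p permutes words *)
definition psi_star :: "nat \<Rightarrow> xlet series \<Rightarrow> (nat \<times> complex) series" where
  "psi_star N \<psi> v = (if valid_Y N v then
      \<psi> (pX 1 (yX v)) +
      (if 2 \<le> length v \<and> v = replicate (length v) (1, 1)
       then (-1) ^ (length v - 1) / of_nat (length v) * \<psi> (replicate (length v - 1) X0 @ [XZ 1])
       else 0)
    else 0)"

definition psi_star_t :: "nat \<Rightarrow> tlet series \<Rightarrow> (nat \<times> int) series" where
  "psi_star_t N \<psi> v = (if valid_TY N v then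
      \<psi> (qT N (tyX v)) +
      (if 2 \<le> length v then
         (let n = length v in
           (\<Sum>a=1..N. (-1) ^ (n - 1) / (of_nat n * of_nat N ^ (n + 1)) *
               \<psi> (replicate (n - 1) TX @ [TXA (iota N a)])) *
           of_nat (card {bs. length bs = n \<and> set bs \<subseteq> {1..N} \<and>
                             map (\<lambda>b. (1, iota N b)) bs = v}))
       else 0)
    else 0)"

definition dmr0_mu :: "nat \<Rightarrow> xlet series \<Rightarrow> bool" where
  "dmr0_mu N \<psi> = (ser_X N \<psi> \<and>
     \<psi> [X0] = 0 \<and> \<psi> [XZ 1] = 0 \<and>
     primitive sh_D \<psi> \<and>
     (\<forall>z. z ^ N = 1 \<longrightarrow> \<psi> [XZ z] - \<psi> [XZ (inverse z)] = 0) \<and>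
     primitive (st_D N) (psi_star N \<psi>))"

definition dmr0_N :: "nat \<Rightarrow> tlet series \<Rightarrow> bool" where
  "dmr0_N N \<psi> = (ser_T N \<psi> \<and>
     \<psi> [TX] = 0 \<and> (\<Sum>a\<in>{0..<int N}. \<psi> [TXA a]) = 0 \<and>
     primitive sh_D \<psi> \<and>
     (\<forall>a\<in>{0..<int N}. \<psi> [TXA a] - \<psi> [TXA ((- a) mod int N)] = 0) \<and>
     primitive stt_D (psi_star_t N \<psi>))"

definition push :: "('a list \<Rightarrow> bool) \<Rightarrow> ('a \<Rightarrow> 'a) \<Rightarrow> 'a series \<Rightarrow> 'a series" where
  "push valid f \<psi> w' = (\<Sum>w\<in>{w. valid w \<and> map f w = w'}. \<psi> w)"

fun delta :: "nat \<Rightarrow> int \<Rightarrow> xlet \<Rightarrow> xlet" where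
  "delta N g X0 = X0"
| "delta N g (XZ z) = XZ (z ^ iota_inv N g)"

fun tdelta :: "nat \<Rightarrow> int \<Rightarrow> tlet \<Rightarrow> tlet" where
  "tdelta N g TX = TX"
| "tdelta N g (TXA a) = TXA ((g * a) mod int N)"

end

theory Submission
  imports Defs "HOL-Number_Theory.Cong"
begin

lemma dw_map:
  assumes D: "\<And>a u v. D (\<tau> a) (map \<tau> u) (map \<tau> v) = D a u v"
  shows "dw D (map \<tau> w) (map \<tau> u) (map \<tau> v) = dw D w u v"
  by (induction w arbitrary: u v) (simp_all add: take_map drop_map D)

lemma coprod_map:
  assumes D: "\<And>a u v. D (\<tau> a) (map \<tau> u) (map \<tau> v) = D a u v"
    and b: "bij \<tau>" and phi: "\<And>w. \<phi> (map \<tau> w) = \<psi> w"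
  shows "coprod D \<phi> (map \<tau> u) (map \<tau> v) = coprod D \<psi> u v"
proof -
  have dwm: "\<And>w u v. dw D (map \<tau> w) (map \<tau> u) (map \<tau> v) = dw D w u v"
    by (rule dw_map) (rule D)
  have inj: "inj (map \<tau>)" using b bij_is_inj inj_mapI by blast
  have sw: "w' = map \<tau> (map (inv \<tau>) w')" for w'
    using b by (simp add: bij_is_surj surj_f_inv_f map_idI)
  have "{w'. dw D w' (map \<tau> u) (map \<tau> v) \<noteq> 0} = map \<tau> ` {w. dw D w u v \<noteq> 0}"
  proof (rule set_eqI, rule iffI)
    fix w' assume "w' \<in> {w'. dw D w' (map \<tau> u) (map \<tau> v) \<noteq> 0}"
    then have "dw D (map (inv \<tau>) w') u v \<noteq> 0"
      using sw[of w'] dwm[of "map (inv \<tau>) w'" u v] by simp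
    then show "w' \<in> map \<tau> ` {w. dw D w u v \<noteq> 0}"
      using image_eqI[where x="map (inv \<tau>) w'" and b=w' and f="map \<tau>" and A="{w. dw D w u v \<noteq> 0}"] sw[of w']
      by blast
  qed (auto simp: dwm)
  then have "coprod D \<phi> (map \<tau> u) (map \<tau> v)
      = (\<Sum>w\<in>{w. dw D w u v \<noteq> 0}. \<phi> (map \<tau> w) * dw D (map \<tau> w) (map \<tau> u) (map \<tau> v))"
    unfolding coprod_def
    by (simp add: sum.reindex[OF inj_on_subset[OF inj subset_UNIV]])
  also have "\<dots> = coprod D \<psi> u v"
    unfolding coprod_def by (simp add: phi dwm)
  finally show ?thesis .
qed

lemma prim_map:
  assumes D: "\<And>a u v. D (\<tau> a) (map \<tau> u) (map \<tau> v) = D a u v"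
    and b: "bij \<tau>" and phi: "\<And>w. \<phi> (map \<tau> w) = \<psi> w"
    and p: "primitive D \<psi>"
  shows "primitive D \<phi>"
  unfolding primitive_def
proof (intro allI)
  fix u' v'
  have sw: "w' = map \<tau> (map (inv \<tau>) w')" for w'
    using b by (simp add: bij_is_surj surj_f_inv_f map_idI)
  obtain u v where u: "u' = map \<tau> u" and v: "v' = map \<tau> v" using sw by blast
  have c: "coprod D \<phi> (map \<tau> u) (map \<tau> v) = coprod D \<psi> u v"
    by (rule coprod_map) (rule D, rule b, rule phi)
  show "coprod D \<phi> u' v' = (if v' = [] then \<phi> u' else 0) + (if u' = [] then \<phi> v' else 0)"
    using p unfolding primitive_def u v c by (simp add: phi)
qed

lemma sh_D_map: "inj \<tau> \<Longrightarrow> sh_D (\<tau> a) (map \<tau> u) (map \<tau> v) = sh_D a u v"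
  unfolding sh_D_def by (auto simp: inj_eq)

lemma push_map:
  assumes inj: "inj \<tau>" and fv: "\<And>w. valid w \<Longrightarrow> map f w = map \<tau> w"
    and z: "\<And>w. \<not> valid w \<Longrightarrow> \<psi> w = 0"
  shows "push valid f \<psi> (map \<tau> w) = \<psi> w"
proof -
  have "{w2. valid w2 \<and> map f w2 = map \<tau> w} = (if valid w then {w} else {})"
  proof -
    have "x = w" if "valid x" "map f x = map \<tau> w" for x
    proof -
      have "map \<tau> x = map \<tau> w" using that fv[of x] by simp
      then show ?thesis by (rule injD[OF inj_mapI[OF inj]])
    qed
    then show ?thesis using fv[of w] by auto
  qed
  then show ?thesis unfolding push_def using z by auto
qed

lemma pow_comm: "((z::'a::comm_monoid_mult) ^ a) ^ b = (z ^ b) ^ a"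
  by (simp only: power_mult[symmetric] mult.commute)

section \<open>Roots of unity part\<close>

definition tauc :: "nat \<Rightarrow> nat \<Rightarrow> complex \<Rightarrow> complex" where
  "tauc N k z = (if z ^ N = 1 then z ^ k else z)"

fun taux :: "nat \<Rightarrow> nat \<Rightarrow> xlet \<Rightarrow> xlet" where
  "taux N k X0 = X0"
| "taux N k (XZ z) = XZ (tauc N k z)"

definition tauY :: "nat \<Rightarrow> nat \<Rightarrow> nat \<times> complex \<Rightarrow> nat \<times> complex" where
  "tauY N k y = (fst y, tauc N k (snd y))"

definition stE :: "nat \<Rightarrow> nat \<times> complex \<Rightarrow> (nat \<times> complex) list \<Rightarrow> (nat \<times> complex) list \<Rightarrow> bool" where
  "stE N y u v = (\<exists>k1 z1 k2 z2. u = [(k1,z1)] \<and> v = [(k2,z2)] \<and> 1 \<le> k1 \<and> 1 \<le> k2 \<and>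
          k1 + k2 = fst y \<and> z1 ^ N = 1 \<and> z2 ^ N = 1 \<and> z1 * z2 = snd y)"

lemma st_D_stE: "st_D N y u v = sh_D y u v + (if stE N y u v then 1 else 0)"
  unfolding st_D_def stE_def by (rule refl)

locale mu_setup =
  fixes N k k' :: nat
  assumes N1: "N > 1" and kk: "k * k' mod N = 1"
begin

lemma pow_kk: assumes "(z::complex) ^ N = 1" shows "(z ^ k) ^ k' = z"
proof -
  have e: "k * k' = N * (k * k' div N) + 1" using kk mod_mult_div_eq[of "k * k'" N] by simp
  have "(z ^ k) ^ k' = z ^ (k * k')" by (simp only: power_mult)
  also have "\<dots> = z ^ (N * (k * k' div N) + 1)" by (simp only: e[symmetric])
  also have "\<dots> = (z ^ N) ^ (k * k' div N) * z" by (simp add: power_add power_mult)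
  finally show ?thesis using assms by simp
qed

lemma tauc_mu: "(tauc N k z) ^ N = 1 \<longleftrightarrow> z ^ N = 1"
  unfolding tauc_def by (auto simp: pow_comm[of z k N])

lemma inj_tauc: "inj (tauc N k)"
proof (rule injI)
  fix z w assume e: "tauc N k z = tauc N k w"
  then have m: "z ^ N = 1 \<longleftrightarrow> w ^ N = 1" using tauc_mu[of z] tauc_mu[of w] by simp
  show "z = w"
  proof (cases "z ^ N = 1")
    case True
    then have "z ^ k = w ^ k" using e m by (simp add: tauc_def)
    then have "(z ^ k) ^ k' = (w ^ k) ^ k'" by simp
    then show ?thesis using pow_kk[OF True] pow_kk[of w] True m by simp
  next
    case False then show ?thesis using e m by (simp add: tauc_def)
  qed
qed

lemma surj_tauc: "surj (tauc N k)"
proof -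
  have "tauc N k (if z ^ N = 1 then z ^ k' else z) = z" for z
  proof (cases "z ^ N = 1")
    case True
    have "(z ^ k') ^ N = 1" using True by (simp add: pow_comm[of z k' N])
    moreover have "(z ^ k') ^ k = z" using pow_kk[OF True]
      by (simp add: pow_comm[of z k' k])
    ultimately show ?thesis by (simp add: tauc_def True)
  qed (simp add: tauc_def)
  then show ?thesis by (rule surjI)
qed

lemma bij_tauc: "bij (tauc N k)" using inj_tauc surj_tauc by (simp add: bij_def)

lemma tauc_mult: "z ^ N = 1 \<Longrightarrow> w ^ N = 1 \<Longrightarrow> tauc N k (z * w) = tauc N k z * tauc N k w"
  unfolding tauc_def by (simp add: power_mult_distrib)

lemma tauc_1: "tauc N k 1 = 1" by (simp add: tauc_def)

lemma tauc_inv: "z ^ N = 1 \<Longrightarrow> tauc N k (inverse z) = inverse (tauc N k z)"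
  unfolding tauc_def by (simp add: power_inverse)

lemma inj_taux: "inj (taux N k)"
proof (rule injI)
  fix a b show "taux N k a = taux N k b \<Longrightarrow> a = b"
    by (cases a; cases b) (simp_all add: inj_tauc[THEN inj_eq])
qed

lemma surj_taux: "surj (taux N k)"
proof -
  have "a \<in> range (taux N k)" for a
  proof (cases a)
    case X0 then have "a = taux N k X0" by simp
    then show ?thesis by blast
  next
    case (XZ z)
    obtain w where "z = tauc N k w" using surjD[OF surj_tauc] by blast
    then have "a = taux N k (XZ w)" using XZ by simp
    then show ?thesis by blast
  qed
  then show ?thesis by blast
qed

lemma bij_taux: "bij (taux N k)" using inj_taux surj_taux by (simp add: bij_def)

lemma valid_X_map: "valid_X N (map (taux N k) w) \<longleftrightarrow> valid_X N w"
proof -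
  have "(case taux N k l of X0 \<Rightarrow> True | XZ z \<Rightarrow> z ^ N = 1) \<longleftrightarrow> (case l of X0 \<Rightarrow> True | XZ z \<Rightarrow> z ^ N = 1)" for l
    by (cases l) (simp_all add: tauc_mu)
  then show ?thesis unfolding valid_X_def by simp
qed

lemma pX_map: "c ^ N = 1 \<Longrightarrow> valid_X N w \<Longrightarrow> map (taux N k) (pX c w) = pX (tauc N k c) (map (taux N k) w)"
proof (induction c w rule: pX.induct)
  case (3 c z w)
  then have z: "z ^ N = 1" and w: "valid_X N w" by (simp_all add: valid_X_def)
  have cz: "(c * z) ^ N = 1" using 3(2) z by (simp add: power_mult_distrib)
  show ?case using 3(1)[OF cz w] tauc_mult[OF 3(2) z] by simp
qed (simp_all add: valid_X_def)

lemma yX_map: "map (taux N k) (yX v) = yX (map (tauY N k) v)"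
  unfolding yX_def by (induction v) (auto simp: tauY_def split: prod.splits)

lemma inj_tauY: "inj (tauY N k)"
  using inj_tauc unfolding tauY_def inj_def by (auto simp: prod_eq_iff)

lemma surj_tauY: "surj (tauY N k)"
proof -
  have "y \<in> range (tauY N k)" for y
  proof -
    obtain w where "snd y = tauc N k w" using surjD[OF surj_tauc] by blast
    then have "y = tauY N k (fst y, w)" by (simp add: tauY_def prod_eq_iff)
    then show ?thesis by blast
  qed
  then show ?thesis by blast
qed

lemma bij_tauY: "bij (tauY N k)" using inj_tauY surj_tauY by (simp add: bij_def)

lemma valid_Y_map: "valid_Y N (map (tauY N k) v) \<longleftrightarrow> valid_Y N v"
  unfolding valid_Y_def tauY_def by (auto simp: tauc_mu)

lemma st_D_map: "st_D N (tauY N k y) (map (tauY N k) u) (map (tauY N k) v) = st_D N y u v"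
proof -
  have sy: "snd (tauY N k y) = tauc N k (snd y)" "fst (tauY N k y) = fst y" by (simp_all add: tauY_def)
  have "stE N (tauY N k y) (map (tauY N k) u) (map (tauY N k) v) \<longleftrightarrow> stE N y u v"
  proof
    assume e: "stE N (tauY N k y) (map (tauY N k) u) (map (tauY N k) v)"
    obtain k1 z1 k2 z2 where h: "map (tauY N k) u = [(k1,z1)]" "map (tauY N k) v = [(k2,z2)]"
      "1 \<le> k1" "1 \<le> k2" "k1 + k2 = fst (tauY N k y)" "z1 ^ N = 1" "z2 ^ N = 1" "z1 * z2 = snd (tauY N k y)"
      using e unfolding stE_def by (elim exE conjE) (rule that; assumption)
    obtain u0 where u0: "u = [u0]" "tauY N k u0 = (k1, z1)" using h(1) by (cases u) auto
    obtain v0 where v0: "v = [v0]" "tauY N k v0 = (k2, z2)" using h(2) by (cases v) auto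
    have a: "fst u0 = k1" "tauc N k (snd u0) = z1" using u0(2) unfolding tauY_def by simp_all
    have b: "fst v0 = k2" "tauc N k (snd v0) = z2" using v0(2) unfolding tauY_def by simp_all
    have mu1: "snd u0 ^ N = 1" using tauc_mu[of "snd u0"] a(2) h(6) by simp
    have mu2: "snd v0 ^ N = 1" using tauc_mu[of "snd v0"] b(2) h(7) by simp
    have "tauc N k (snd u0 * snd v0) = tauc N k (snd y)"
      using tauc_mult[OF mu1 mu2] a(2) b(2) h(8) sy(1) by simp
    then have m: "snd u0 * snd v0 = snd y" using inj_tauc by (simp add: inj_eq)
    have u0e: "u = [(k1, snd u0)]" using a(1) u0(1) by (simp add: prod_eq_iff)
    have v0e: "v = [(k2, snd v0)]" using b(1) v0(1) by (simp add: prod_eq_iff)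
    show "stE N y u v"
      unfolding stE_def apply (rule exI[of _ k1], rule exI[of _ "snd u0"], rule exI[of _ k2], rule exI[of _ "snd v0"])
      using u0e v0e h(3,4,5) mu1 mu2 m sy(2) by simp
  next
    assume "stE N y u v"
    then obtain k1 z1 k2 z2 where h: "u = [(k1,z1)]" "v = [(k2,z2)]"
      "1 \<le> k1" "1 \<le> k2" "k1 + k2 = fst y" "z1 ^ N = 1" "z2 ^ N = 1" "z1 * z2 = snd y"
      unfolding stE_def by (elim exE conjE) (rule that; assumption)
    have t1: "map (tauY N k) u = [(k1, tauc N k z1)]" "map (tauY N k) v = [(k2, tauc N k z2)]"
      using h(1,2) by (simp_all add: tauY_def)
    have t2: "tauc N k z1 ^ N = 1" "tauc N k z2 ^ N = 1" using h(6,7) tauc_mu by blast+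
    have t3: "tauc N k z1 * tauc N k z2 = snd (tauY N k y)"
      using tauc_mult[OF h(6,7)] h(8) sy(1) by simp
    show "stE N (tauY N k y) (map (tauY N k) u) (map (tauY N k) v)"
      unfolding stE_def apply (rule exI[of _ k1], rule exI[of _ "tauc N k z1"], rule exI[of _ k2], rule exI[of _ "tauc N k z2"])
      using t1 t2 t3 h(3,4,5) sy(2) by simp
  qed
  then show ?thesis by (simp only: st_D_stE sh_D_map[OF inj_tauY])
qed

lemma set_yX: "l \<in> set (yX v) \<Longrightarrow> l = X0 \<or> (\<exists>y\<in>set v. l = XZ (snd y))"
proof -
  assume "l \<in> set (yX v)"
  then obtain y where y: "y \<in> set v" "l \<in> set (replicate (fst y - 1) X0 @ [XZ (snd y)])"
    unfolding yX_def by (auto simp: case_prod_beta)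
  then have "l = X0 \<or> l = XZ (snd y)" by (auto simp: in_set_replicate)
  then show ?thesis using y(1) by blast
qed

lemma valid_yX: assumes "valid_Y N v" shows "valid_X N (yX v)"
  unfolding valid_X_def
proof
  fix l assume "l \<in> set (yX v)"
  then have "l = X0 \<or> (\<exists>y\<in>set v. l = XZ (snd y))" by (rule set_yX)
  then show "case l of X0 \<Rightarrow> True | XZ z \<Rightarrow> z ^ N = 1"
    using assms unfolding valid_Y_def by auto
qed

lemma rep_map: assumes i: "inj f" shows "map f v = replicate (length v) (f x) \<longleftrightarrow> v = replicate (length v) x"
proof -
  have "map f v = replicate (length v) (f x) \<longleftrightarrow> map f v = map f (replicate (length v) x)" by simp
  also have "\<dots> \<longleftrightarrow> v = replicate (length v) x" by (rule inj_map_eq_map[OF i])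
  finally show ?thesis .
qed

lemma psi_star_map:
  assumes phi: "\<And>w. \<phi> (map (taux N k) w) = \<psi> w"
  shows "psi_star N \<phi> (map (tauY N k) v) = psi_star N \<psi> v"
proof (cases "valid_Y N v")
  case True
  have r: "map (tauY N k) v = replicate (length v) (1, 1) \<longleftrightarrow> v = replicate (length v) (1, 1)"
    using rep_map[OF inj_tauY, of v "(1,1)"] by (simp add: tauY_def tauc_1)
  have p: "pX 1 (yX (map (tauY N k) v)) = map (taux N k) (pX 1 (yX v))"
    using pX_map[of 1 "yX v"] valid_yX[OF True] by (simp add: yX_map tauc_1)
  have q: "map (taux N k) (replicate m X0 @ [XZ 1]) = replicate m X0 @ [XZ 1]" for m
    by (simp add: tauc_1)
  have q2: "\<phi> (replicate m X0 @ [XZ 1]) = \<psi> (replicate m X0 @ [XZ 1])" for m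
    using phi[of "replicate m X0 @ [XZ 1]"] unfolding q .
  show ?thesis
    unfolding psi_star_def valid_Y_map length_map r p phi q2 by (rule refl)
next
  case False
  then show ?thesis unfolding psi_star_def valid_Y_map by simp
qed

end

lemma gamma_facts:
  assumes N3: "N \<ge> 3" and cop: "coprime \<gamma> (int N)"
  shows "\<gamma> mod int N \<noteq> 0" "int (iota_inv N \<gamma>) = \<gamma> mod int N"
    "coprime (iota_inv N \<gamma>) N" "\<exists>k'. iota_inv N \<gamma> * k' mod N = 1"
proof -
  show gm: "\<gamma> mod int N \<noteq> 0"
  proof
    assume "\<gamma> mod int N = 0"
    then have "int N dvd \<gamma>" by auto
    then have "\<bar>int N\<bar> = 1" using coprime_common_divisor_int[OF cop, of "int N"] by simp
    then show False using N3 by simp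
  qed
  show ik: "int (iota_inv N \<gamma>) = \<gamma> mod int N"
    using gm N3 unfolding iota_inv_def by simp
  have "coprime (\<gamma> mod int N) (int N)" using cop N3 by simp
  then show cp: "coprime (iota_inv N \<gamma>) N" unfolding ik[symmetric] by simp
  obtain x where "[iota_inv N \<gamma> * x = Suc 0] (mod N)" using cong_solve_coprime_nat[OF cp] by blast
  then have "iota_inv N \<gamma> * x mod N = 1" using N3 unfolding cong_def by simp
  then show "\<exists>k'. iota_inv N \<gamma> * k' mod N = 1" by blast
qed

lemma mu_main:
  assumes N3: "N \<ge> 3" and cop: "coprime \<gamma> (int N)" and d: "dmr0_mu N \<psi>"
  shows "dmr0_mu N (push (valid_X N) (delta N \<gamma>) \<psi>)"
proof -
  define k where "k = iota_inv N \<gamma>"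
  obtain k' where kk: "k * k' mod N = 1" using gamma_facts[OF N3 cop] unfolding k_def by blast
  interpret mu_setup N k k' using N3 kk by unfold_locales auto
  define \<phi> where "\<phi> = push (valid_X N) (delta N \<gamma>) \<psi>"
  have fv: "map (delta N \<gamma>) w = map (taux N k) w" if "valid_X N w" for w
  proof (rule map_cong[OF refl])
    fix l assume "l \<in> set w"
    then have "case l of X0 \<Rightarrow> True | XZ z \<Rightarrow> z ^ N = 1" using that unfolding valid_X_def by blast
    then show "delta N \<gamma> l = taux N k l"
      by (cases l) (simp_all add: tauc_def k_def)
  qed
  have zero: "\<psi> w = 0" if "\<not> valid_X N w" for w
    using d that unfolding dmr0_mu_def ser_X_def by blast
  have phi: "\<phi> (map (taux N k) w) = \<psi> w" for w
    unfolding \<phi>_def by (rule push_map[OF inj_taux fv zero])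
  have sw: "w' = map (taux N k) (map (inv (taux N k)) w')" for w'
    using bij_taux by (simp add: bij_is_surj surj_f_inv_f map_idI)
  have ser: "ser_X N \<phi>"
    unfolding ser_X_def
  proof (intro allI impI)
    fix w' assume "\<phi> w' \<noteq> 0"
    then have "\<phi> (map (taux N k) (map (inv (taux N k)) w')) \<noteq> 0" using sw[of w'] by simp
    then have "\<psi> (map (inv (taux N k)) w') \<noteq> 0" unfolding phi .
    then have "valid_X N (map (inv (taux N k)) w')" using zero by blast
    then have "valid_X N (map (taux N k) (map (inv (taux N k)) w'))" unfolding valid_X_map .
    then show "valid_X N w'" using sw[of w'] by simp
  qed
  have c1: "\<phi> [X0] = 0" using phi[of "[X0]"] d unfolding dmr0_mu_def by simp
  have c2: "\<phi> [XZ 1] = 0" using phi[of "[XZ 1]"] d unfolding dmr0_mu_def by (simp add: tauc_1)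
  have c3: "primitive sh_D \<phi>"
    using prim_map[where D=sh_D and \<tau>="taux N k" and \<phi>=\<phi> and \<psi>=\<psi>, OF sh_D_map[OF inj_taux] bij_taux phi] d unfolding dmr0_mu_def by blast
  have c4: "\<phi> [XZ z] - \<phi> [XZ (inverse z)] = 0" if z: "z ^ N = 1" for z
  proof -
    obtain w where w: "z = tauc N k w" using surjD[OF surj_tauc] by blast
    have wm: "w ^ N = 1" using z w tauc_mu by simp
    have "inverse z = tauc N k (inverse w)" using w tauc_inv[OF wm] by simp
    then have "\<phi> [XZ z] = \<psi> [XZ w]" "\<phi> [XZ (inverse z)] = \<psi> [XZ (inverse w)]"
      using phi[of "[XZ w]"] phi[of "[XZ (inverse w)]"] w by simp_all
    then show ?thesis using d wm unfolding dmr0_mu_def by simp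
  qed
  have ps: "psi_star N \<phi> (map (tauY N k) v) = psi_star N \<psi> v" for v
    by (rule psi_star_map) (rule phi)
  have c5: "primitive (st_D N) (psi_star N \<phi>)"
    using prim_map[where D="st_D N" and \<tau>="tauY N k" and \<phi>="psi_star N \<phi>" and \<psi>="psi_star N \<psi>", OF st_D_map bij_tauY ps] d unfolding dmr0_mu_def by blast
  show ?thesis unfolding \<phi>_def[symmetric] dmr0_mu_def using ser c1 c2 c3 c4 c5 by blast
qed

section \<open>Residue part\<close>

definition taua :: "nat \<Rightarrow> int \<Rightarrow> int \<Rightarrow> int" where
  "taua N g a = (if 0 \<le> a \<and> a < int N then (g * a) mod int N else a)"

fun taut :: "nat \<Rightarrow> int \<Rightarrow> tlet \<Rightarrow> tlet" where
  "taut N g TX = TX"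
| "taut N g (TXA a) = TXA (taua N g a)"

definition tauTY :: "nat \<Rightarrow> int \<Rightarrow> nat \<times> int \<Rightarrow> nat \<times> int" where
  "tauTY N g y = (fst y, taua N g (snd y))"

definition sttE :: "nat \<times> int \<Rightarrow> (nat \<times> int) list \<Rightarrow> (nat \<times> int) list \<Rightarrow> bool" where
  "sttE y u v = (\<exists>k1 k2. u = [(k1, snd y)] \<and> v = [(k2, snd y)] \<and> 1 \<le> k1 \<and> 1 \<le> k2 \<and>
          k1 + k2 = fst y)"

lemma stt_D_sttE: "stt_D y u v = sh_D y u v + (if sttE y u v then 1 else 0)"
  unfolding stt_D_def sttE_def by (rule refl)

lemma mod_inv_cancel:
  fixes c d x :: int
  assumes "(c * d) mod int N = 1" "0 \<le> x" "x < int N"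
  shows "(c * ((d * x) mod int N)) mod int N = x"
proof -
  have "(c * ((d * x) mod int N)) mod int N = (c * (d * x)) mod int N" by (simp add: mod_mult_right_eq)
  also have "\<dots> = ((c * d) * x) mod int N" by (simp add: mult.assoc)
  also have "\<dots> = (((c * d) mod int N) * x) mod int N" by (simp add: mod_mult_left_eq)
  also have "\<dots> = x" using assms by simp
  finally show ?thesis .
qed

locale t_setup =
  fixes N :: nat and g g' :: int
  assumes N1: "N > 1" and gg: "(g * g') mod int N = 1"
begin

lemma gg2: "(g' * g) mod int N = 1" using gg by (simp add: mult.commute)

lemma taua_range: "(0 \<le> taua N g a \<and> taua N g a < int N) \<longleftrightarrow> (0 \<le> a \<and> a < int N)"
  unfolding taua_def using N1 by auto

lemma inj_taua: "inj (taua N g)"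
proof (rule injI)
  fix a b assume e: "taua N g a = taua N g b"
  then have "(0 \<le> taua N g a \<and> taua N g a < int N) \<longleftrightarrow> (0 \<le> taua N g b \<and> taua N g b < int N)" by simp
  then have r: "(0 \<le> a \<and> a < int N) \<longleftrightarrow> (0 \<le> b \<and> b < int N)" using taua_range[of a] taua_range[of b] by blast
  show "a = b"
  proof (cases "0 \<le> a \<and> a < int N")
    case True
    then have T2: "0 \<le> b \<and> b < int N" using r by blast
    have "taua N g a = (g * a) mod int N" unfolding taua_def by (rule if_P[OF True])
    moreover have "taua N g b = (g * b) mod int N" unfolding taua_def by (rule if_P[OF T2])
    ultimately have ab: "(g * a) mod int N = (g * b) mod int N" using e by (simp only:)
    have "a = (g' * ((g * a) mod int N)) mod int N"
      by (rule sym, rule mod_inv_cancel[OF gg2 True[THEN conjunct1] True[THEN conjunct2]])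
    also have "\<dots> = (g' * ((g * b) mod int N)) mod int N" unfolding ab by (rule refl)
    also have "\<dots> = b" by (rule mod_inv_cancel[OF gg2 T2[THEN conjunct1] T2[THEN conjunct2]])
    finally show ?thesis .
  next
    case False
    then have F2: "\<not> (0 \<le> b \<and> b < int N)" using r by blast
    have ha: "taua N g a = a" unfolding taua_def by (rule if_not_P[OF False])
    have hb: "taua N g b = b" unfolding taua_def by (rule if_not_P[OF F2])
    have "a = taua N g a" using ha by (rule sym)
    also have "\<dots> = taua N g b" by (rule e)
    also have "\<dots> = b" by (rule hb)
    finally show ?thesis .
  qed
qed

lemma surj_taua: "surj (taua N g)"
proof -
  have "taua N g (if 0 \<le> a \<and> a < int N then (g' * a) mod int N else a) = a" for a
  proof (cases "0 \<le> a \<and> a < int N")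
    case True
    have r: "0 \<le> (g' * a) mod int N \<and> (g' * a) mod int N < int N" using N1 by simp
    have "taua N g ((g' * a) mod int N) = (g * ((g' * a) mod int N)) mod int N"
      unfolding taua_def by (rule if_P[OF r])
    also have "\<dots> = a" by (rule mod_inv_cancel[OF gg True[THEN conjunct1] True[THEN conjunct2]])
    finally show ?thesis unfolding if_P[OF True] .
  next
    case False
    have "taua N g a = a" unfolding taua_def by (rule if_not_P[OF False])
    then show ?thesis unfolding if_not_P[OF False] .
  qed
  then show ?thesis by (rule surjI)
qed

lemma taua_in: "0 \<le> a \<Longrightarrow> a < int N \<Longrightarrow> taua N g a = (g * a) mod int N"
  unfolding taua_def by simp

lemma taua_neg: "0 \<le> a \<Longrightarrow> a < int N \<Longrightarrow> taua N g ((- a) mod int N) = (- taua N g a) mod int N"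
proof -
  assume a: "0 \<le> a" "a < int N"
  have r: "0 \<le> (- a) mod int N" "(- a) mod int N < int N" using N1 by simp_all
  have "taua N g ((- a) mod int N) = (g * ((- a) mod int N)) mod int N" by (rule taua_in[OF r])
  also have "\<dots> = (g * (- a)) mod int N" by (rule mod_mult_right_eq)
  also have "\<dots> = (- (g * a)) mod int N" by (simp only: mult_minus_right)
  also have "\<dots> = (- ((g * a) mod int N)) mod int N" by (rule mod_minus_eq[symmetric])
  also have "\<dots> = (- taua N g a) mod int N" by (simp only: taua_in[OF a])
  finally show ?thesis .
qed

lemma taua_diff: "0 \<le> a \<Longrightarrow> a < int N \<Longrightarrow> 0 \<le> b \<Longrightarrow> b < int N \<Longrightarrow>
    taua N g ((a - b) mod int N) = (taua N g a - taua N g b) mod int N"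
proof -
  assume a: "0 \<le> a" "a < int N" and b: "0 \<le> b" "b < int N"
  have r: "0 \<le> (a - b) mod int N" "(a - b) mod int N < int N" using N1 by simp_all
  have "taua N g ((a - b) mod int N) = (g * ((a - b) mod int N)) mod int N" by (rule taua_in[OF r])
  also have "\<dots> = (g * (a - b)) mod int N" by (rule mod_mult_right_eq)
  also have "\<dots> = (g * a - g * b) mod int N" by (simp only: right_diff_distrib)
  also have "\<dots> = ((g * a) mod int N - (g * b) mod int N) mod int N" by (rule mod_diff_eq[symmetric])
  also have "\<dots> = (taua N g a - taua N g b) mod int N" by (simp only: taua_in[OF a] taua_in[OF b])
  finally show ?thesis .
qed

lemma inj_taut: "inj (taut N g)"
proof (rule injI)
  fix a b show "taut N g a = taut N g b \<Longrightarrow> a = b"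
    by (cases a; cases b) (simp_all add: inj_taua[THEN inj_eq])
qed

lemma surj_taut: "surj (taut N g)"
proof -
  have "a \<in> range (taut N g)" for a
  proof (cases a)
    case TX then have "a = taut N g TX" by simp
    then show ?thesis by blast
  next
    case (TXA b)
    obtain c where "b = taua N g c" using surjD[OF surj_taua] by blast
    then have "a = taut N g (TXA c)" using TXA by simp
    then show ?thesis by blast
  qed
  then show ?thesis by blast
qed

lemma bij_taut: "bij (taut N g)" using inj_taut surj_taut by (simp add: bij_def)

lemma inj_tauTY: "inj (tauTY N g)"
  using inj_taua unfolding tauTY_def inj_def by (auto simp: prod_eq_iff)

lemma surj_tauTY: "surj (tauTY N g)"
proof -
  have "y \<in> range (tauTY N g)" for y
  proof -
    obtain w where "snd y = taua N g w" using surjD[OF surj_taua] by blast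
    then have "y = tauTY N g (fst y, w)" by (simp add: tauTY_def prod_eq_iff)
    then show ?thesis by blast
  qed
  then show ?thesis by blast
qed

lemma bij_tauTY: "bij (tauTY N g)" using inj_tauTY surj_tauTY by (simp add: bij_def)

lemma valid_T_map: "valid_T N (map (taut N g) w) \<longleftrightarrow> valid_T N w"
proof -
  have "(case taut N g l of TX \<Rightarrow> True | TXA a \<Rightarrow> 0 \<le> a \<and> a < int N) \<longleftrightarrow>
        (case l of TX \<Rightarrow> True | TXA a \<Rightarrow> 0 \<le> a \<and> a < int N)" for l
    by (cases l) (simp_all only: taut.simps tlet.case taua_range)
  then show ?thesis unfolding valid_T_def by simp
qed

lemma valid_TY_map: "valid_TY N (map (tauTY N g) v) \<longleftrightarrow> valid_TY N v"
proof -
  have "(case tauTY N g y of (k, a) \<Rightarrow> 1 \<le> k \<and> 0 \<le> a \<and> a < int N) \<longleftrightarrow>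
        (case y of (k, a) \<Rightarrow> 1 \<le> k \<and> 0 \<le> a \<and> a < int N)" for y
    using taua_range[of "snd y"] by (cases y) (simp add: tauTY_def)
  then show ?thesis unfolding valid_TY_def by simp
qed

lemma nextA_map: "nextA (map (taut N g) w) = map_option (taua N g) (nextA w)"
  by (induction w rule: nextA.induct) simp_all

lemma nextA_in: "nextA w = Some b \<Longrightarrow> TXA b \<in> set w"
  by (induction w rule: nextA.induct) auto

lemma qT_map: "valid_T N w \<Longrightarrow> map (taut N g) (qT N w) = qT N (map (taut N g) w)"
proof (induction w)
  case (Cons l w)
  have w: "valid_T N w" using Cons(2) by (simp add: valid_T_def)
  show ?case
  proof (cases l)
    case TX then show ?thesis using Cons(1)[OF w] by simp
  next
    case (TXA a)
    have a: "0 \<le> a" "a < int N" using Cons(2) TXA by (simp_all add: valid_T_def)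
    have e: "taua N g (case nextA w of None \<Rightarrow> a | Some b \<Rightarrow> (a - b) mod int N) =
        (case nextA (map (taut N g) w) of None \<Rightarrow> taua N g a | Some b \<Rightarrow> (taua N g a - b) mod int N)"
    proof (cases "nextA w")
      case None then show ?thesis by (simp add: nextA_map)
    next
      case (Some b)
      then have "TXA b \<in> set w" by (rule nextA_in)
      then have b: "0 \<le> b" "b < int N" using w unfolding valid_T_def by fastforce+
      show ?thesis using Some taua_diff[OF a b] by (simp add: nextA_map)
    qed
    show ?thesis using Cons(1)[OF w] e TXA by simp
  qed
qed simp

lemma tyX_map: "map (taut N g) (tyX v) = tyX (map (tauTY N g) v)"
  unfolding tyX_def by (induction v) (auto simp: tauTY_def split: prod.splits)

lemma set_tyX: "l \<in> set (tyX v) \<Longrightarrow> l = TX \<or> (\<exists>y\<in>set v. l = TXA (snd y))"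
proof -
  assume "l \<in> set (tyX v)"
  then obtain y where y: "y \<in> set v" "l \<in> set (replicate (fst y - 1) TX @ [TXA (snd y)])"
    unfolding tyX_def by (auto simp: case_prod_beta)
  then have "l = TX \<or> l = TXA (snd y)" by (auto simp: in_set_replicate)
  then show ?thesis using y(1) by blast
qed

lemma valid_tyX: assumes "valid_TY N v" shows "valid_T N (tyX v)"
  unfolding valid_T_def
proof
  fix l assume "l \<in> set (tyX v)"
  then have "l = TX \<or> (\<exists>y\<in>set v. l = TXA (snd y))" by (rule set_tyX)
  then show "case l of TX \<Rightarrow> True | TXA a \<Rightarrow> 0 \<le> a \<and> a < int N"
    using assms unfolding valid_TY_def by auto
qed

lemma map_tauTY_single: "map (tauTY N g) x = [(k1, taua N g a)] \<longleftrightarrow> x = [(k1, a)]"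
proof -
  have e: "map (tauTY N g) [(k1, a)] = [(k1, taua N g a)]" by (simp add: tauTY_def)
  show ?thesis using inj_map_eq_map[OF inj_tauTY, of x "[(k1, a)]"] unfolding e .
qed

lemma stt_D_map: "stt_D (tauTY N g y) (map (tauTY N g) u) (map (tauTY N g) v) = stt_D y u v"
proof -
  have sy: "snd (tauTY N g y) = taua N g (snd y)" "fst (tauTY N g y) = fst y" by (simp_all add: tauTY_def)
  have "sttE (tauTY N g y) (map (tauTY N g) u) (map (tauTY N g) v) \<longleftrightarrow> sttE y u v"
    unfolding sttE_def sy map_tauTY_single by (rule refl)
  then show ?thesis unfolding stt_D_sttE sh_D_map[OF inj_tauTY] by (rule arg_cong)
qed

lemma taua_mem: "taua N g a \<in> {0..<int N} \<longleftrightarrow> a \<in> {0..<int N}"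
  using taua_range[of a] by (simp only: atLeastLessThan_iff)

lemma bij_taua_on: "bij_betw (taua N g) {0..<int N} {0..<int N}"
proof -
  have "taua N g ` {0..<int N} = {0..<int N}"
  proof
    show "taua N g ` {0..<int N} \<subseteq> {0..<int N}"
    proof
      fix x assume "x \<in> taua N g ` {0..<int N}"
      then obtain a where "a \<in> {0..<int N}" "x = taua N g a" by blast
      then show "x \<in> {0..<int N}" using taua_mem[of a] by simp
    qed
    show "{0..<int N} \<subseteq> taua N g ` {0..<int N}"
    proof
      fix a assume a: "a \<in> {0..<int N}"
      obtain b where b: "a = taua N g b" using surjD[OF surj_taua] by blast
      then have "b \<in> {0..<int N}" using a taua_mem[of b] by simp
      then show "a \<in> taua N g ` {0..<int N}" using b by blast
    qed
  qed
  then show ?thesis using inj_on_subset[OF inj_taua subset_UNIV] unfolding bij_betw_def by blast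
qed

lemma sum_taua: "(\<Sum>a\<in>{0..<int N}. F (taua N g a)) = (\<Sum>a\<in>{0..<int N}. F a)"
  using sum.reindex_bij_betw[OF bij_taua_on, of F] .

lemma iota_inv_iota: "b \<in> {1..N} \<Longrightarrow> iota_inv N (iota N b) = b"
proof -
  assume a: "b \<in> {1..N}"
  show "iota_inv N (iota N b) = b"
  proof (cases "b = N")
    case True then show ?thesis by (simp add: iota_def iota_inv_def)
  next
    case False
    then have "int b mod int N = int b" using a by simp
    then show ?thesis using a by (simp add: iota_def iota_inv_def)
  qed
qed

lemma iota_iota_inv: "b \<in> {0..<int N} \<Longrightarrow> iota N (iota_inv N b) = b"
proof -
  assume b: "b \<in> {0..<int N}"
  show "iota N (iota_inv N b) = b"
  proof (cases "b = 0")
    case True then show ?thesis by (simp add: iota_def iota_inv_def)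
  next
    case False
    then have "b mod int N = b" using b by simp
    then show ?thesis using b False by (simp add: iota_def iota_inv_def)
  qed
qed

lemma iota_range: "iota N b \<in> {0..<int N}"
  using N1 by (simp add: iota_def)

lemma iota_inv_range: "b \<in> {0..<int N} \<Longrightarrow> iota_inv N b \<in> {1..N}"
proof -
  assume b: "b \<in> {0..<int N}"
  show ?thesis
  proof (cases "b = 0")
    case True then show ?thesis using b N1 by (simp add: iota_inv_def)
  next
    case False
    then have "b mod int N = b" using b by simp
    then show ?thesis using b False by (auto simp: iota_inv_def)
  qed
qed

lemma iota_bij: "bij_betw (iota N) {1..N} {0..<int N}"
  apply (rule bij_betw_byWitness[where f'="iota_inv N"])
  using iota_inv_iota iota_iota_inv iota_range iota_inv_range by blast+

lemma sum_iota: "(\<Sum>a=1..N. F (iota N a)) = (\<Sum>b\<in>{0..<int N}. F b)"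
  using sum.reindex_bij_betw[OF iota_bij, of F] .

lemma sum_iota_taua: "(\<Sum>a=1..N. F (taua N g (iota N a))) = (\<Sum>a=1..N. F (iota N a))"
  unfolding sum_iota[of "\<lambda>b. F (taua N g b)"] sum_iota[of F] by (rule sum_taua)

definition cS :: "(nat \<times> int) list \<Rightarrow> nat list set" where
  "cS v = {bs. length bs = length v \<and> set bs \<subseteq> {1..N} \<and> map (\<lambda>b. (1, iota N b)) bs = v}"

lemma cS_eq: "cS v = (if set v \<subseteq> {1} \<times> {0..<int N} then {map (\<lambda>y. iota_inv N (snd y)) v} else {})"
proof (cases "set v \<subseteq> {1} \<times> {0..<int N}")
  case True
  let ?b = "map (\<lambda>y. iota_inv N (snd y)) v"
  have "?b \<in> cS v"
  proof -
    have "set ?b \<subseteq> {1..N}" using True iota_inv_range by auto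
    moreover have "map (\<lambda>b. (1, iota N b)) ?b = v"
    proof (rule nth_equalityI)
      fix i assume "i < length (map (\<lambda>b. (1, iota N b)) ?b)"
      then have i: "i < length v" by simp
      then have "v ! i \<in> {1} \<times> {0..<int N}" using True nth_mem by blast
      then show "map (\<lambda>b. (1, iota N b)) ?b ! i = v ! i"
        using i iota_iota_inv by (auto simp: prod_eq_iff)
    qed simp
    ultimately show ?thesis unfolding cS_def by simp
  qed
  moreover have "bs = ?b" if "bs \<in> cS v" for bs
  proof -
    have bs: "set bs \<subseteq> {1..N}" "map (\<lambda>b. (1, iota N b)) bs = v" using that unfolding cS_def by auto
    have "?b = map (\<lambda>b. iota_inv N (iota N b)) bs" using bs(2)[symmetric] by simp
    also have "\<dots> = bs" using bs(1) iota_inv_iota by (simp add: map_idI subset_iff)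
    finally show ?thesis by simp
  qed
  ultimately have "cS v = {?b}" by blast
  then show ?thesis using True by simp
next
  case False
  have "bs \<notin> cS v" for bs
  proof
    assume "bs \<in> cS v"
    then have "map (\<lambda>b. (1, iota N b)) bs = v" unfolding cS_def by auto
    then have "set v \<subseteq> {1} \<times> {0..<int N}" using iota_range by auto
    then show False using False by simp
  qed
  then show ?thesis using False by auto
qed

lemma cS_card_map: "card (cS (map (tauTY N g) v)) = card (cS v)"
proof -
  have tm: "taua N g b \<in> {0..<int N} \<longleftrightarrow> b \<in> {0..<int N}" for b
    using taua_range[of b] by simp
  have t: "tauTY N g y \<in> {1} \<times> {0..<int N} \<longleftrightarrow> y \<in> {1} \<times> {0..<int N}" for y
    by (cases y) (simp only: tauTY_def fst_conv snd_conv mem_Times_iff tm)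
  have "set (map (tauTY N g) v) \<subseteq> {1} \<times> {0..<int N} \<longleftrightarrow> (\<forall>y\<in>set v. tauTY N g y \<in> {1} \<times> {0..<int N})"
    by (simp only: set_map image_subset_iff)
  also have "\<dots> \<longleftrightarrow> set v \<subseteq> {1} \<times> {0..<int N}" by (simp only: t subset_iff Ball_def)
  finally have "set (map (tauTY N g) v) \<subseteq> {1} \<times> {0..<int N} \<longleftrightarrow> set v \<subseteq> {1} \<times> {0..<int N}" .
  then show ?thesis unfolding cS_eq by simp
qed

definition Kc :: "nat \<Rightarrow> rat" where
  "Kc n = (-1) ^ (n - 1) / (of_nat n * of_nat N ^ (n + 1))"

lemma psi_star_t_eq: "psi_star_t N \<psi> v = (if valid_TY N v then
      \<psi> (qT N (tyX v)) +
      (if 2 \<le> length v then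
         (\<Sum>a=1..N. Kc (length v) * \<psi> (replicate (length v - 1) TX @ [TXA (iota N a)])) *
           of_nat (card (cS v))
       else 0)
    else 0)"
  unfolding psi_star_t_def Let_def cS_def Kc_def by (rule refl)

lemma psi_star_t_map:
  assumes phi: "\<And>w. \<phi> (map (taut N g) w) = \<psi> w"
  shows "psi_star_t N \<phi> (map (tauTY N g) v) = psi_star_t N \<psi> v"
proof (cases "valid_TY N v")
  case True
  have A: "\<phi> (qT N (tyX (map (tauTY N g) v))) = \<psi> (qT N (tyX v))"
    unfolding tyX_map[symmetric] qT_map[OF valid_tyX[OF True], symmetric] phi by (rule refl)
  have X: "\<phi> (replicate m TX @ [TXA (taua N g b)]) = \<psi> (replicate m TX @ [TXA b])" for m b
  proof -
    have "map (taut N g) (replicate m TX @ [TXA b]) = replicate m TX @ [TXA (taua N g b)]" by simp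
    then show ?thesis using phi[of "replicate m TX @ [TXA b]"] by simp
  qed
  have B: "(\<Sum>a=1..N. c * \<phi> (replicate m TX @ [TXA (iota N a)])) =
           (\<Sum>a=1..N. c * \<psi> (replicate m TX @ [TXA (iota N a)]))" for c m
    unfolding sum_iota_taua[of "\<lambda>b. c * \<phi> (replicate m TX @ [TXA b])", symmetric] X by (rule refl)
  show ?thesis
    unfolding psi_star_t_eq valid_TY_map length_map A B cS_card_map by (rule refl)
next
  case False
  then show ?thesis unfolding psi_star_t_def valid_TY_map by simp
qed

end


lemma t_main:
  assumes N3: "N \<ge> 3" and cop: "coprime \<gamma> (int N)" and d: "dmr0_N N \<psi>"
  shows "dmr0_N N (push (valid_T N) (tdelta N \<gamma>) \<psi>)"
proof -
  obtain x where "[\<gamma> * x = 1] (mod int N)" using cong_solve_coprime_int[OF cop] by blast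
  then have gx: "(\<gamma> * x) mod int N = 1" using N3 unfolding cong_def by simp
  interpret t_setup N \<gamma> x using N3 gx by unfold_locales auto
  define \<phi> where "\<phi> = push (valid_T N) (tdelta N \<gamma>) \<psi>"
  have fv: "map (tdelta N \<gamma>) w = map (taut N \<gamma>) w" if "valid_T N w" for w
  proof (rule map_cong[OF refl])
    fix l assume "l \<in> set w"
    then have "case l of TX \<Rightarrow> True | TXA a \<Rightarrow> 0 \<le> a \<and> a < int N" using that unfolding valid_T_def by blast
    then show "tdelta N \<gamma> l = taut N \<gamma> l"
      by (cases l) (simp_all add: taua_def)
  qed
  have zero: "\<psi> w = 0" if "\<not> valid_T N w" for w
    using d that unfolding dmr0_N_def ser_T_def by blast
  have phi: "\<phi> (map (taut N \<gamma>) w) = \<psi> w" for w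
    unfolding \<phi>_def by (rule push_map[OF inj_taut fv zero])
  have sw: "w' = map (taut N \<gamma>) (map (inv (taut N \<gamma>)) w')" for w'
    using bij_taut by (simp add: bij_is_surj surj_f_inv_f map_idI)
  have ser: "ser_T N \<phi>"
    unfolding ser_T_def
  proof (intro allI impI)
    fix w' assume "\<phi> w' \<noteq> 0"
    then have "\<phi> (map (taut N \<gamma>) (map (inv (taut N \<gamma>)) w')) \<noteq> 0" using sw[of w'] by simp
    then have "\<psi> (map (inv (taut N \<gamma>)) w') \<noteq> 0" unfolding phi .
    then have "valid_T N (map (inv (taut N \<gamma>)) w')" using zero by blast
    then have "valid_T N (map (taut N \<gamma>) (map (inv (taut N \<gamma>)) w'))" unfolding valid_T_map .
    then show "valid_T N w'" using sw[of w'] by simp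
  qed
  have p1: "\<phi> [TXA (taua N \<gamma> a)] = \<psi> [TXA a]" for a
    using phi[of "[TXA a]"] by simp
  have dsym: "\<forall>a\<in>{0..<int N}. \<psi> [TXA a] - \<psi> [TXA ((- a) mod int N)] = 0"
    using d unfolding dmr0_N_def by blast
  have d1: "\<psi> [TX] = 0" using d unfolding dmr0_N_def by blast
  have d2: "(\<Sum>a\<in>{0..<int N}. \<psi> [TXA a]) = 0" using d unfolding dmr0_N_def by blast
  have c1: "\<phi> [TX] = 0" using phi[of "[TX]"] d1 by simp
  have c2: "(\<Sum>a\<in>{0..<int N}. \<phi> [TXA a]) = 0"
    using sum_taua[of "\<lambda>a. \<phi> [TXA a]"] d2 unfolding p1 by simp
  have c3: "primitive sh_D \<phi>"
    using prim_map[where D=sh_D and \<tau>="taut N \<gamma>" and \<phi>=\<phi> and \<psi>=\<psi>, OF sh_D_map[OF inj_taut] bij_taut phi]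
      d unfolding dmr0_N_def by blast
  have c4: "\<phi> [TXA a] - \<phi> [TXA ((- a) mod int N)] = 0" if a: "a \<in> {0..<int N}" for a
  proof -
    obtain b where b: "a = taua N \<gamma> b" using surjD[OF surj_taua] by blast
    have "taua N \<gamma> b \<in> {0..<int N}" using a unfolding b .
    then have br: "b \<in> {0..<int N}" unfolding taua_mem .
    have br2: "0 \<le> b" "b < int N" using br by simp_all
    have neg: "(- a) mod int N = taua N \<gamma> ((- b) mod int N)"
      unfolding b taua_neg[OF br2] by (rule refl)
    have "\<phi> [TXA a] = \<psi> [TXA b]" unfolding b by (rule p1)
    moreover have "\<phi> [TXA ((- a) mod int N)] = \<psi> [TXA ((- b) mod int N)]" unfolding neg by (rule p1)
    moreover have "\<psi> [TXA b] - \<psi> [TXA ((- b) mod int N)] = 0" using dsym br by blast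
    ultimately show ?thesis by simp
  qed
  have ps: "psi_star_t N \<phi> (map (tauTY N \<gamma>) v) = psi_star_t N \<psi> v" for v
    by (rule psi_star_t_map) (rule phi)
  have c5: "primitive stt_D (psi_star_t N \<phi>)"
    using prim_map[where D=stt_D and \<tau>="tauTY N \<gamma>" and \<phi>="psi_star_t N \<phi>" and \<psi>="psi_star_t N \<psi>",
        OF stt_D_map bij_tauTY ps] d unfolding dmr0_N_def by blast
  show ?thesis unfolding \<phi>_def[symmetric] dmr0_N_def using ser c1 c2 c3 c4 c5 by blast
qed

theorem proposition3p14:
  fixes N :: nat and \<gamma> :: int
  assumes "N \<ge> 3" and "coprime \<gamma> (int N)"
  shows "(\<forall>\<psi>. dmr0_N N \<psi> \<longrightarrow> dmr0_N N (push (valid_T N) (tdelta N \<gamma>) \<psi>)) \<and>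
         (\<forall>\<psi>. dmr0_mu N \<psi> \<longrightarrow> dmr0_mu N (push (valid_X N) (delta N \<gamma>) \<psi>))"
  using t_main[OF assms] mu_main[OF assms] by blast

end
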